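(* Let $N^2$ be either the round sphere $\mathbb{S}^2$ or the hyperbolic plane $\mathbb{H}^2$ (curvature $\pm1$), let $\pi:N^2\times\mathbb{R}\to N^2$ be the projection onto the first factor of the Riemannian product, and let $\gamma:I\subset\mathbb{R}\to N^2$ be a curve parametrised by arc length. Then the cylinder $S=\pi^{-1}(\gamma(I))$ is a biminimal surface with respect to $\lambda$ in $N^2\times\mathbb{R}$ if and only if $\gamma$ is a biminimal curve with respect to $\lambda$ on $N^2$.
   Context: For a map $\phi$: tension field $\tau(\phi)=\operatorname{trace}\nabla d\phi$, bitension field $\tau_2(\phi)=\sum_i(\nabla^\phi_{e_i}\nabla^\phi_{e_i}-\nabla^\phi_{\nabla_{e_i}e_i})\tau(\phi)+\sum_iR^N(d\phi(e_i),\tau(\phi))d\phi(e_i)$, with $R(X,Y)Z=\nabla_{[X,Y]}Z-\nabla_X\nabla_YZ+\nabla_Y\nabla_XZ$. An immersion is biminimal with respect to $\lambda\in\mathbb{R}$ if $[\tau_2(\phi)]^\perp-\lambda[\tau(\phi)]^\perp=0$ ($\perp$ = normal component). For an arc-length curve on a surface of Gaussian curvature $G$ with signed curvature $k$, this is equivalent to $k''-k^3+kG-\lambda k=0$. *)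

theory Defs
  imports "HOL-Analysis.Analysis"
begin

text \<open>The domain is a coordinate patch in a Euclidean space 'd (coordinate vectors = Basis);
 the target Riemannian manifold N is a nondegenerate hypersurface of a (pseudo-)Euclidean
 space 'v, described by the ambient bilinear form gm (its restriction to TN is the metric),
 the tangential projection Tn p v onto T_p N (so the Levi-Civita connection of N is Tn of the
 ambient derivative, Gauss formula), and its curvature tensor Rm p X Y Z.\<close>

definition pd :: "('d::real_normed_vector \<Rightarrow> 'v::real_normed_vector) \<Rightarrow> 'd \<Rightarrow> 'd \<Rightarrow> 'v" where
  "pd f b u = frechet_derivative f (at u) b"

definition ginv :: "('d::euclidean_space \<Rightarrow> 'd \<Rightarrow> real) \<Rightarrow> 'd \<Rightarrow> 'd \<Rightarrow> real" where
  "ginv G = (SOME H. \<forall>i\<in>Basis. \<forall>j\<in>Basis.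
      (\<Sum>k\<in>Basis. G i k * H k j) = (if i = j then 1 else 0))"

definition indmet :: "('v \<Rightarrow> 'v \<Rightarrow> real) \<Rightarrow> ('d::euclidean_space \<Rightarrow> 'v::real_normed_vector)
    \<Rightarrow> 'd \<Rightarrow> 'd \<Rightarrow> 'd \<Rightarrow> real" where
  "indmet gm \<phi> u i j = gm (pd \<phi> i u) (pd \<phi> j u)"

definition christoffel :: "('v \<Rightarrow> 'v \<Rightarrow> real) \<Rightarrow> ('d::euclidean_space \<Rightarrow> 'v::real_normed_vector)
    \<Rightarrow> 'd \<Rightarrow> 'd \<Rightarrow> 'd \<Rightarrow> 'd \<Rightarrow> real" where
  "christoffel gm \<phi> u i j k = (1/2) * (\<Sum>l\<in>Basis. ginv (indmet gm \<phi> u) k l *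
      (pd (\<lambda>w. indmet gm \<phi> w j l) i u + pd (\<lambda>w. indmet gm \<phi> w i l) j u
        - pd (\<lambda>w. indmet gm \<phi> w i j) l u))"

definition tension :: "('v \<Rightarrow> 'v \<Rightarrow> real) \<Rightarrow> ('v \<Rightarrow> 'v \<Rightarrow> 'v)
    \<Rightarrow> ('d::euclidean_space \<Rightarrow> 'v::real_normed_vector) \<Rightarrow> 'd \<Rightarrow> 'v" where
  "tension gm Tn \<phi> u = (\<Sum>i\<in>Basis. \<Sum>j\<in>Basis. ginv (indmet gm \<phi> u) i j *\<^sub>R
      (Tn (\<phi> u) (pd (pd \<phi> j) i u) - (\<Sum>k\<in>Basis. christoffel gm \<phi> u i j k *\<^sub>R pd \<phi> k u)))"

definition covd :: "('v \<Rightarrow> 'v \<Rightarrow> 'v) \<Rightarrow> ('d::real_normed_vector \<Rightarrow> 'v::real_normed_vector)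
    \<Rightarrow> ('d \<Rightarrow> 'v) \<Rightarrow> 'd \<Rightarrow> 'd \<Rightarrow> 'v" where
  "covd Tn \<phi> V i u = Tn (\<phi> u) (pd V i u)"

definition bitension :: "('v \<Rightarrow> 'v \<Rightarrow> real) \<Rightarrow> ('v \<Rightarrow> 'v \<Rightarrow> 'v) \<Rightarrow> ('v \<Rightarrow> 'v \<Rightarrow> 'v \<Rightarrow> 'v \<Rightarrow> 'v)
    \<Rightarrow> ('d::euclidean_space \<Rightarrow> 'v::real_normed_vector) \<Rightarrow> 'd \<Rightarrow> 'v" where
  "bitension gm Tn Rm \<phi> u = (let \<tau> = tension gm Tn \<phi> in
     (\<Sum>i\<in>Basis. \<Sum>j\<in>Basis. ginv (indmet gm \<phi> u) i j *\<^sub>R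
        (covd Tn \<phi> (covd Tn \<phi> \<tau> j) i u
         - (\<Sum>k\<in>Basis. christoffel gm \<phi> u i j k *\<^sub>R covd Tn \<phi> \<tau> k u)))
   + (\<Sum>i\<in>Basis. \<Sum>j\<in>Basis. ginv (indmet gm \<phi> u) i j *\<^sub>R
        Rm (\<phi> u) (pd \<phi> i u) (\<tau> u) (pd \<phi> j u)))"

definition nrm :: "('v \<Rightarrow> 'v \<Rightarrow> real) \<Rightarrow> ('d::euclidean_space \<Rightarrow> 'v::real_normed_vector)
    \<Rightarrow> 'd \<Rightarrow> 'v \<Rightarrow> 'v" where
  "nrm gm \<phi> u V = V - (\<Sum>i\<in>Basis. \<Sum>j\<in>Basis.
      (ginv (indmet gm \<phi> u) i j * gm V (pd \<phi> j u)) *\<^sub>R pd \<phi> i u)"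

definition biminimal :: "('v \<Rightarrow> 'v \<Rightarrow> real) \<Rightarrow> ('v \<Rightarrow> 'v \<Rightarrow> 'v) \<Rightarrow> ('v \<Rightarrow> 'v \<Rightarrow> 'v \<Rightarrow> 'v \<Rightarrow> 'v)
    \<Rightarrow> ('d::euclidean_space \<Rightarrow> 'v::real_normed_vector) \<Rightarrow> 'd set \<Rightarrow> real \<Rightarrow> bool" where
  "biminimal gm Tn Rm \<phi> U lam \<longleftrightarrow>
     (\<forall>u\<in>U. nrm gm \<phi> u (bitension gm Tn Rm \<phi> u) - lam *\<^sub>R nrm gm \<phi> u (tension gm Tn \<phi> u) = 0)"

section \<open>The space forms N^2(c), c = 1 (sphere) or c = -1 (hyperboloid model), and N^2(c) x R\<close>

definition lf :: "real \<Rightarrow> real^3 \<Rightarrow> real^3 \<Rightarrow> real" where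
  "lf c x y = x$1 * y$1 + x$2 * y$2 + c * (x$3 * y$3)"

definition Nsp :: "real \<Rightarrow> (real^3) set" where
  "Nsp c = {x. lf c x x = c \<and> (c = 1 \<or> x$3 > 0)}"

definition tanN :: "real \<Rightarrow> real^3 \<Rightarrow> real^3 \<Rightarrow> real^3" where
  "tanN c x v = v - (lf c v x / c) *\<^sub>R x"

text \<open>curvature with the convention R(X,Y)Z = nabla_[X,Y]Z - nabla_X nabla_Y Z + nabla_Y nabla_X Z\<close>
definition curvN :: "real \<Rightarrow> real^3 \<Rightarrow> real^3 \<Rightarrow> real^3 \<Rightarrow> real^3 \<Rightarrow> real^3" where
  "curvN c p X Y Z = (c * lf c X Z) *\<^sub>R Y - (c * lf c Y Z) *\<^sub>R X"

definition lfP :: "real \<Rightarrow> (real^3) \<times> real \<Rightarrow> (real^3) \<times> real \<Rightarrow> real" where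
  "lfP c X Y = lf c (fst X) (fst Y) + snd X * snd Y"

definition tanP :: "real \<Rightarrow> (real^3) \<times> real \<Rightarrow> (real^3) \<times> real \<Rightarrow> (real^3) \<times> real" where
  "tanP c p X = (tanN c (fst p) (fst X), snd X)"

definition curvP :: "real \<Rightarrow> (real^3) \<times> real \<Rightarrow> (real^3) \<times> real \<Rightarrow> (real^3) \<times> real
    \<Rightarrow> (real^3) \<times> real \<Rightarrow> (real^3) \<times> real" where
  "curvP c p X Y Z = (curvN c (fst p) (fst X) (fst Y) (fst Z), 0)"

definition cylinder :: "(real \<Rightarrow> real^3) \<Rightarrow> real \<times> real \<Rightarrow> (real^3) \<times> real" where
  "cylinder \<gamma> = (\<lambda>(s, t). (\<gamma> s, t))"

definition smooth_curve_on :: "real set \<Rightarrow> (real \<Rightarrow> real^3) \<Rightarrow> bool" where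
  "smooth_curve_on I \<gamma> \<longleftrightarrow>
     (\<forall>n. \<forall>s\<in>I. (((\<lambda>f s. vector_derivative f (at s)) ^^ n) \<gamma>) differentiable (at s))"

end

theory Submission
  imports Defs
begin

lemma bb_lf: "bounded_bilinear (lf c)"
proof (rule bounded_bilinear.intro)
  show "\<And>a a' b. lf c (a + a') b = lf c a b + lf c a' b" by (simp add: lf_def algebra_simps)
  show "\<And>a b b'. lf c a (b + b') = lf c a b + lf c a b'" by (simp add: lf_def algebra_simps)
  show "\<And>r a b. lf c (r *\<^sub>R a) b = r *\<^sub>R lf c a b" by (simp add: lf_def algebra_simps)
  show "\<And>a r b. lf c a (r *\<^sub>R b) = r *\<^sub>R lf c a b" by (simp add: lf_def algebra_simps)
  show "\<exists>K. \<forall>a b. norm (lf c a b) \<le> norm a * norm b * K"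
  proof (intro exI allI)
    fix a b :: "real^3"
    have h: "\<And>i j. \<bar>a$i * b$j\<bar> \<le> norm a * norm b"
      by (simp add: abs_mult mult_mono component_le_norm_cart)
    have t: "\<And>x y z::real. \<bar>x+y+z\<bar> \<le> \<bar>x\<bar>+\<bar>y\<bar>+\<bar>z\<bar>" by arith
    have "norm (lf c a b) \<le> \<bar>a$1 * b$1\<bar> + \<bar>a$2 * b$2\<bar> + \<bar>c\<bar> * \<bar>a$3 * b$3\<bar>"
      unfolding lf_def real_norm_def using t[of "a$1 * b$1" "a$2 * b$2" "c * (a$3 * b$3)"]
      by (simp add: abs_mult)
    also have "\<dots> \<le> norm a * norm b * (2 + \<bar>c\<bar>)"
      using h[of 1 1] h[of 2 2] mult_left_mono[OF h[of 3 3], of "\<bar>c\<bar>"]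
      by (simp add: algebra_simps)
    finally show "norm (lf c a b) \<le> norm a * norm b * (2 + \<bar>c\<bar>)" .
  qed
qed

lemma fd_local:
  assumes "open S" "x \<in> S" "\<And>y. y \<in> S \<Longrightarrow> f y = g y"
  shows "frechet_derivative f (at x) = frechet_derivative g (at x)"
proof -
  have "\<And>D. (f has_derivative D) (at x) \<longleftrightarrow> (g has_derivative D) (at x)"
  proof
    fix D assume "(f has_derivative D) (at x)"
    then show "(g has_derivative D) (at x)"
      by (rule has_derivative_transform_within_open[OF _ assms(1,2)]) (simp add: assms(3))
  next
    fix D assume "(g has_derivative D) (at x)"
    then show "(f has_derivative D) (at x)"
      by (rule has_derivative_transform_within_open[OF _ assms(1,2)]) (simp add: assms(3))
  qed
  then show ?thesis unfolding frechet_derivative_def by simp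
qed

lemma pd_local:
  assumes "open S" "x \<in> S" "\<And>y. y \<in> S \<Longrightarrow> f y = g y"
  shows "pd f v x = pd g v x"
  unfolding pd_def using fd_local[OF assms] by simp

lemma diff_local:
  assumes "open S" "x \<in> S" "\<And>y. y \<in> S \<Longrightarrow> f y = g y" "g differentiable (at x)"
  shows "f differentiable (at x)"
proof -
  obtain D where "(g has_derivative D) (at x)" using assms(4) unfolding differentiable_def by blast
  then have "(f has_derivative D) (at x)"
    by (rule has_derivative_transform_within_open[OF _ assms(1,2)]) (simp add: assms(3))
  then show ?thesis unfolding differentiable_def by blast
qed

lemma pd_const:
  assumes "open S" "x \<in> S" "\<And>y. y \<in> S \<Longrightarrow> f y = k"
  shows "pd f v x = 0"
proof -
  have "pd f v x = pd (\<lambda>_. k) v x" using pd_local[OF assms] by simp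
  also have "\<dots> = 0"
    unfolding pd_def using frechet_derivative_at[OF has_derivative_const[of k]] by metis
  finally show ?thesis .
qed

lemma pd_vd:
  fixes f :: "real \<Rightarrow> 'a::real_normed_vector"
  assumes "f differentiable (at s)"
  shows "pd f 1 s = vector_derivative f (at s)"
proof -
  have "(f has_derivative (\<lambda>h. h *\<^sub>R vector_derivative f (at s))) (at s)"
    using assms vector_derivative_works has_vector_derivative_def by blast
  from frechet_derivative_at[OF this] show ?thesis unfolding pd_def
    by (metis scaleR_one)
qed

lemma lift_hd:
  fixes F :: "real \<Rightarrow> 'a::real_normed_vector" and a :: real and w :: "real \<times> real"
  assumes "F differentiable (at (fst w))"
  shows "((\<lambda>w. (F (fst w), a * snd w)) has_derivative
     (\<lambda>h. (frechet_derivative F (at (fst w)) (fst h), a * snd h))) (at w)"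
proof -
  have F: "(F has_derivative frechet_derivative F (at (fst w))) (at (fst w))"
    using assms frechet_derivative_works by blast
  have a: "((\<lambda>w. F (fst w)) has_derivative (\<lambda>h. frechet_derivative F (at (fst w)) (fst h))) (at w)"
    by (rule has_derivative_compose[OF has_derivative_fst[OF has_derivative_ident] F])
  have b: "((\<lambda>w::real\<times>real. a * snd w) has_derivative (\<lambda>h. a * snd h)) (at w)"
    by (auto intro!: derivative_eq_intros)
  show ?thesis by (rule has_derivative_Pair[OF a b])
qed

lemma pd_lift:
  fixes F :: "real \<Rightarrow> 'a::real_normed_vector" and a :: real and G :: "real \<times> real \<Rightarrow> 'a \<times> real"
  assumes "open I" "s \<in> I" "F differentiable (at s)"
    "\<And>w. w \<in> I \<times> UNIV \<Longrightarrow> G w = (F (fst w), a * snd w)"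
  shows "pd G (1,0) (s,t) = (pd F 1 s, 0)" "pd G (0,1) (s,t) = (0, a)"
proof -
  have o: "open (I \<times> (UNIV::real set))" using assms(1) by (simp add: open_Times)
  have e: "pd G v (s,t) = pd (\<lambda>w. (F (fst w), a * snd w)) v (s,t)" for v
    by (rule pd_local[OF o]) (use assms in auto)
  have h: "frechet_derivative (\<lambda>w. (F (fst w), a * snd w)) (at (s,t)) =
     (\<lambda>h. (frechet_derivative F (at s) (fst h), a * snd h))"
    using frechet_derivative_at[OF lift_hd[of F "(s,t)" a]] assms(3) by simp
  have l: "linear (frechet_derivative F (at s))"
    using assms(3) frechet_derivative_works has_derivative_linear by blast
  show "pd G (1,0) (s,t) = (pd F 1 s, 0)" using e h by (simp add: pd_def)
  show "pd G (0,1) (s,t) = (0, a)" using e h linear_0[OF l] by (simp add: pd_def)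
qed

lemma lf_hvd:
  assumes "(f has_vector_derivative f') (at s)" "(g has_vector_derivative g') (at s)"
  shows "((\<lambda>s. lf c (f s) (g s)) has_vector_derivative (lf c (f s) g' + lf c f' (g s))) (at s)"
  by (rule bounded_bilinear.has_vector_derivative[OF bb_lf assms])

lemma lf_diff:
  fixes f g :: "real \<Rightarrow> real^3"
  assumes "f differentiable (at s)" "g differentiable (at s)"
  shows "(\<lambda>s. lf c (f s) (g s)) differentiable (at s)"
proof -
  have "(f has_vector_derivative vector_derivative f (at s)) (at s)"
       "(g has_vector_derivative vector_derivative g (at s)) (at s)"
    using assms vector_derivative_works by blast+
  from lf_hvd[OF this] show ?thesis by (rule differentiableI_vector)
qed

lemma tanN_diff:
  fixes f g :: "real \<Rightarrow> real^3"
  assumes "f differentiable (at s)" "g differentiable (at s)" "c \<noteq> 0"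
  shows "(\<lambda>s. tanN c (f s) (g s)) differentiable (at s)"
  unfolding tanN_def using assms by (intro differentiable_diff differentiable_scaleR differentiable_divide lf_diff) auto

lemma tanN_hvd:
  assumes "(f has_vector_derivative f') (at s)" "(g has_vector_derivative g') (at s)"
  shows "((\<lambda>s. tanN c (f s) (g s)) has_vector_derivative
    (g' - ((lf c (g s) (f s) / c) *\<^sub>R f' + ((lf c (g s) f' + lf c g' (f s)) / c) *\<^sub>R f s))) (at s)"
proof -
  have l: "((\<lambda>s. lf c (g s) (f s)) has_field_derivative (lf c (g s) f' + lf c g' (f s))) (at s)"
    using lf_hvd[OF assms(2,1)] has_real_derivative_iff_has_vector_derivative by blast
  show ?thesis unfolding tanN_def
    by (rule has_vector_derivative_diff[OF assms(2) has_vector_derivative_scaleR[OF DERIV_cdivide[OF l] assms(1)]])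
qed

lemma ginv_id:
  assumes "\<And>i j. i \<in> Basis \<Longrightarrow> j \<in> Basis \<Longrightarrow> G i j = (if i = j then 1 else 0)"
    "i \<in> Basis" "j \<in> Basis"
  shows "ginv G i j = (if i = j then 1 else 0)"
proof -
  let ?P = "\<lambda>H. \<forall>i\<in>Basis. \<forall>j\<in>Basis. (\<Sum>k\<in>Basis. G i k * H k j) = (if i = j then 1 else 0)"
  have s: "(\<Sum>k\<in>Basis. G i k * H k j) = H i j" if "i \<in> Basis" for H i j
  proof -
    have "(\<Sum>k\<in>Basis. G i k * H k j) = (\<Sum>k\<in>Basis. (if k = i then H k j else 0))"
      using that assms(1) by (intro sum.cong) auto
    also have "\<dots> = H i j" using that by simp
    finally show ?thesis .
  qed
  have "?P (\<lambda>i j. if i = j then 1 else 0)"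
  proof (intro ballI)
    fix i j :: 'a assume "i \<in> Basis" "j \<in> Basis"
    from s[OF this(1), of "\<lambda>i j. if i = j then 1 else 0" j] show "(\<Sum>k\<in>Basis. G i k * (if k = j then 1 else 0)) = (if i = j then 1 else 0)" by simp
  qed
  then have "?P (ginv G)" unfolding ginv_def by (rule someI[where P = ?P])
  then have "(\<Sum>k\<in>Basis. G i k * ginv G k j) = (if i = j then 1 else 0)" using assms(2,3) by blast
  then show ?thesis using s[OF assms(2), of "ginv G" j] by simp
qed

lemma basis_prod_rr: "(Basis :: (real \<times> real) set) = {(1,0),(0,1)}"
  by (auto simp: Basis_prod_def)

lemma tanN_0[simp]: "tanN c x 0 = 0"
  by (simp add: tanN_def lf_def)

lemma curvN_0[simp]: "curvN c p 0 Y 0 = 0"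
  by (simp add: curvN_def lf_def)

lemma lf_0[simp]: "lf c X 0 = 0" "lf c 0 X = 0"
  by (simp_all add: lf_def)

lemma sum_B2: "(\<Sum>i\<in>(Basis::(real\<times>real) set). f i) = f (1,0) + f (0,1)"
  by (simp add: basis_prod_rr)

lemma diag_sum:
  fixes F :: "'a \<Rightarrow> 'a \<Rightarrow> 'b::real_vector"
  assumes "finite A"
  shows "(\<Sum>i\<in>A. \<Sum>j\<in>A. (if i = j then 1 else (0::real)) *\<^sub>R F i j) = (\<Sum>i\<in>A. F i i)"
proof (rule sum.cong[OF refl])
  fix i assume "i \<in> A"
  have "(\<Sum>j\<in>A. (if i = j then 1 else (0::real)) *\<^sub>R F i j) = (\<Sum>j\<in>A. if i = j then F i j else 0)"
    by (rule sum.cong) auto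
  also have "\<dots> = F i i" using assms \<open>i \<in> A\<close> by (simp add: sum.delta)
  finally show "(\<Sum>j\<in>A. (if i = j then 1 else (0::real)) *\<^sub>R F i j) = F i i" .
qed

theorem proposition5p1:
  fixes c lam :: real and I :: "real set" and \<gamma> :: "real \<Rightarrow> real^3"
  assumes "c = 1 \<or> c = -1"
    and "open I"
    and "smooth_curve_on I \<gamma>"
    and "\<forall>s\<in>I. \<gamma> s \<in> Nsp c"
    and "\<forall>s\<in>I. lf c (vector_derivative \<gamma> (at s)) (vector_derivative \<gamma> (at s)) = 1"
  shows "biminimal (lfP c) (tanP c) (curvP c) (cylinder \<gamma>) (I \<times> UNIV) lam
     \<longleftrightarrow> biminimal (lf c) (tanN c) (curvN c) \<gamma> I lam"
proof -
  have c0: "c \<noteq> 0" using assms(1) by auto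
  have oI: "open I" by (rule assms(2))
  have o2: "open (I \<times> (UNIV::real set))" using oI by (simp add: open_Times)
  define D where "D n = ((\<lambda>f s. vector_derivative f (at s)) ^^ n) \<gamma>" for n
  have Dd: "D n differentiable (at s)" if "s \<in> I" for n s
    using assms(3) that unfolding smooth_curve_on_def D_def by blast
  have DS: "D (Suc n) = (\<lambda>s. vector_derivative (D n) (at s))" for n by (simp add: D_def)
  have D0: "D 0 = \<gamma>" by (simp add: D_def)
  have Dv: "(D n has_vector_derivative D (Suc n) s) (at s)" if "s \<in> I" for n s
  proof -
    have "(D n has_vector_derivative vector_derivative (D n) (at s)) (at s)"
      using Dd[OF that] vector_derivative_works by blast
    then show ?thesis by (simp add: DS)
  qed
  have Dpd: "pd (D n) 1 s = D (Suc n) s" if "s \<in> I" for n s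
    using pd_vd[OF Dd[OF that]] by (simp add: DS)
  have gd: "\<gamma> differentiable (at s)" if "s \<in> I" for s using Dd[OF that, of 0] D0 by simp
  have P1: "pd \<gamma> 1 s = D 1 s" if "s \<in> I" for s using Dpd[OF that, of 0] D0 by simp
  have H: "lf c (D 1 s) (D 1 s) = 1" if "s \<in> I" for s using assms(5) that D0 DS[of 0] by simp
  have P2: "pd (pd \<gamma> 1) 1 s = D 2 s" if "s \<in> I" for s
  proof -
    have "pd (pd \<gamma> 1) 1 s = pd (D 1) 1 s" by (rule pd_local[OF oI that P1])
    then show ?thesis using Dpd[OF that, of 1] by (simp add: numeral_2_eq_2)
  qed
  have P1d: "(pd \<gamma> 1) differentiable (at s)" if "s \<in> I" for s
    by (rule diff_local[OF oI that P1 Dd[OF that]])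
  have indc: "indmet (lf c) \<gamma> s 1 1 = 1" if "s \<in> I" for s
    using H[OF that] P1[OF that] by (simp add: indmet_def)
  have ginvc: "ginv (indmet (lf c) \<gamma> s) 1 1 = 1" if "s \<in> I" for s
    using ginv_id[of "indmet (lf c) \<gamma> s" 1 1] indc[OF that] by (simp add: Basis_real_def)
  have chc: "christoffel (lf c) \<gamma> s 1 1 1 = 0" if "s \<in> I" for s
  proof -
    have "pd (\<lambda>w. indmet (lf c) \<gamma> w 1 1) 1 s = 0" by (rule pd_const[OF oI that indc])
    then show ?thesis by (simp add: christoffel_def Basis_real_def)
  qed
  define \<tau> where "\<tau> = tension (lf c) (tanN c) \<gamma>"
  have tau0: "\<tau> s = tanN c (\<gamma> s) (pd (pd \<gamma> 1) 1 s)" if "s \<in> I" for s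
    using ginvc[OF that] chc[OF that] by (simp add: \<tau>_def tension_def Basis_real_def)
  have tauc: "\<tau> s = tanN c (D 0 s) (D 2 s)" if "s \<in> I" for s
    using tau0[OF that] P2[OF that] D0 by simp
  define T' where "T' s = D 3 s - ((lf c (D 2 s) (D 0 s) / c) *\<^sub>R D 1 s +
      ((lf c (D 2 s) (D 1 s) + lf c (D 3 s) (D 0 s)) / c) *\<^sub>R D 0 s)" for s
  have Thvd: "((\<lambda>s. tanN c (D 0 s) (D 2 s)) has_vector_derivative T' s) (at s)" if "s \<in> I" for s
    using tanN_hvd[OF Dv[OF that, of 0] Dv[OF that, of 2]] by (simp add: T'_def numeral_3_eq_3 numeral_2_eq_2)
  have taud: "\<tau> differentiable (at s)" if "s \<in> I" for s
    by (rule diff_local[OF oI that tauc differentiableI_vector[OF Thvd[OF that]]])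
  have pdtau: "pd \<tau> 1 s = T' s" if "s \<in> I" for s
  proof -
    have "pd \<tau> 1 s = pd (\<lambda>s. tanN c (D 0 s) (D 2 s)) 1 s" by (rule pd_local[OF oI that tauc])
    also have "\<dots> = T' s"
      using pd_vd[OF differentiableI_vector[OF Thvd[OF that]]] vector_derivative_at[OF Thvd[OF that]] by simp
    finally show ?thesis .
  qed
  have T'd: "T' differentiable (at s)" if "s \<in> I" for s
    unfolding T'_def using Dd[OF that] c0
    by (intro differentiable_diff differentiable_add differentiable_scaleR differentiable_divide lf_diff) auto
  define C where "C = covd (tanN c) \<gamma> \<tau> 1"
  have Ce: "C s = tanN c (D 0 s) (T' s)" if "s \<in> I" for s
    using pdtau[OF that] D0 by (simp add: C_def covd_def)
  have Cd: "C differentiable (at s)" if "s \<in> I" for s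
    by (rule diff_local[OF oI that Ce tanN_diff[OF Dd[OF that] T'd[OF that] c0]])

  define \<phi> where "\<phi> = cylinder \<gamma>"
  have phie: "\<phi> w = (\<gamma> (fst w), 1 * snd w)" for w by (simp add: \<phi>_def cylinder_def case_prod_beta)
  have inI: "fst w \<in> I" if "w \<in> I \<times> UNIV" for w :: "real \<times> real" using that by auto
  have pdphi: "pd \<phi> (1,0) (s,t) = (pd \<gamma> 1 s, 0)" "pd \<phi> (0,1) (s,t) = (0, 1)" if "s \<in> I" for s t
    using pd_lift[OF oI that gd[OF that], of \<phi> 1] phie by auto
  have indP: "indmet (lfP c) \<phi> w i j = (if i = j then 1 else 0)"
    if "w \<in> I \<times> UNIV" "i \<in> Basis" "j \<in> Basis" for w i j
  proof -
    obtain s t where w: "w = (s,t)" "s \<in> I" using \<open>w \<in> I \<times> UNIV\<close> by (metis mem_Times_iff prod.collapse)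
    have e: "indmet (lfP c) \<phi> (s,t) (1,0) (1,0) = 1" "indmet (lfP c) \<phi> (s,t) (0,1) (0,1) = 1"
       "indmet (lfP c) \<phi> (s,t) (1,0) (0,1) = 0" "indmet (lfP c) \<phi> (s,t) (0,1) (1,0) = 0"
      unfolding indmet_def pdphi[OF w(2)] lfP_def using H[OF w(2)] P1[OF w(2)] by simp_all
    have ij: "i \<in> {(1,0),(0,1)}" "j \<in> {(1,0),(0,1)}" using that(2,3) basis_prod_rr by auto
    show ?thesis unfolding w using e ij by auto
  qed
  have ginvP: "ginv (indmet (lfP c) \<phi> w) i j = (if i = j then 1 else 0)"
    if "w \<in> I \<times> UNIV" "i \<in> Basis" "j \<in> Basis" for w i j
    by (rule ginv_id[OF indP[OF that(1)] that(2,3)])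
  have chP: "christoffel (lfP c) \<phi> w i j k = 0"
    if "w \<in> I \<times> UNIV" "i \<in> Basis" "j \<in> Basis" "k \<in> Basis" for w i j k
  proof -
    have z: "pd (\<lambda>w. indmet (lfP c) \<phi> w a b) v w = 0" if "a \<in> Basis" "b \<in> Basis" for a b v
      by (rule pd_const[OF o2 \<open>w \<in> I \<times> UNIV\<close>]) (rule indP[OF _ that])
    show ?thesis unfolding christoffel_def using z that by simp
  qed
  define \<tau>P where "\<tau>P = tension (lfP c) (tanP c) \<phi>"
  have pdpd1: "pd (pd \<phi> (1,0)) (1,0) (s,t) = (pd (pd \<gamma> 1) 1 s, 0)" if "s \<in> I" for s t
  proof -
    have "pd \<phi> (1,0) w = (pd \<gamma> 1 (fst w), 0 * snd w)" if "w \<in> I \<times> UNIV" for w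
      using pdphi(1)[OF inI[OF that], of "snd w"] by simp
    from pd_lift(1)[OF oI \<open>s \<in> I\<close> P1d[OF \<open>s \<in> I\<close>] this] show ?thesis .
  qed
  have pdpd2: "pd (pd \<phi> (0,1)) (0,1) (s,t) = 0" if "s \<in> I" for s t
  proof -
    have "pd \<phi> (0,1) w = (0,1)" if "w \<in> I \<times> UNIV" for w
      using pdphi(2)[OF inI[OF that], of "snd w"] by simp
    from pd_const[OF o2 _ this] that show ?thesis by auto
  qed
  have tauP: "\<tau>P w = (\<tau> (fst w), 0)" if "w \<in> I \<times> UNIV" for w
  proof -
    obtain s t where w: "w = (s,t)" "s \<in> I" using \<open>w \<in> I \<times> UNIV\<close> by (metis mem_Times_iff prod.collapse)
    have g: "ginv (indmet (lfP c) \<phi> (s,t)) i j = (if i = j then 1 else 0)" if "i \<in> Basis" "j \<in> Basis" for i j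
      using ginvP[OF _ that] w by auto
    have ch: "christoffel (lfP c) \<phi> (s,t) i j k = 0" if "i \<in> Basis" "j \<in> Basis" "k \<in> Basis" for i j k
      using chP[OF _ that] w by auto
    have "\<tau>P (s,t) = (\<Sum>i\<in>Basis. \<Sum>j\<in>Basis. (if i = j then 1 else (0::real)) *\<^sub>R
        tanP c (\<phi> (s,t)) (pd (pd \<phi> j) i (s,t)))"
      unfolding \<tau>P_def tension_def using g ch by (intro sum.cong refl) simp
    also have "\<dots> = (\<Sum>i\<in>Basis. tanP c (\<phi> (s,t)) (pd (pd \<phi> i) i (s,t)))"
      by (rule diag_sum) simp
    also have "\<dots> = (\<tau> s, 0)"
      unfolding sum_B2 using pdpd1[OF w(2)] pdpd2[OF w(2)] tau0[OF w(2)]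
      by (simp add: tanP_def phie zero_prod_def)
    finally show ?thesis using w by simp
  qed

  have tauP2: "\<tau>P w = (\<tau> (fst w), 0 * snd w)" if "w \<in> I \<times> UNIV" for w
    using tauP[OF that] by simp
  have pdtauP: "pd \<tau>P (1,0) (s,t) = (pd \<tau> 1 s, 0)" "pd \<tau>P (0,1) (s,t) = (0, 0)" if "s \<in> I" for s t
    using pd_lift[OF oI that taud[OF that] tauP2] by simp_all
  have cv1: "covd (tanP c) \<phi> \<tau>P (1,0) (s,t) = (C s, 0)" if "s \<in> I" for s t
    using pdtauP(1)[OF that] by (simp add: covd_def tanP_def phie C_def)
  have cv2: "covd (tanP c) \<phi> \<tau>P (0,1) (s,t) = 0" if "s \<in> I" for s t
    using pdtauP(2)[OF that] by (simp add: covd_def tanP_def phie zero_prod_def)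
  have ccv1: "covd (tanP c) \<phi> (covd (tanP c) \<phi> \<tau>P (1,0)) (1,0) (s,t) = (covd (tanN c) \<gamma> C 1 s, 0)"
    if "s \<in> I" for s t
  proof -
    have "covd (tanP c) \<phi> \<tau>P (1,0) w = (C (fst w), 0 * snd w)" if "w \<in> I \<times> UNIV" for w
      using cv1[OF inI[OF that], of "snd w"] by simp
    from pd_lift(1)[OF oI \<open>s \<in> I\<close> Cd[OF \<open>s \<in> I\<close>] this]
    have p: "pd (covd (tanP c) \<phi> \<tau>P (1,0)) (1,0) (s,t) = (pd C 1 s, 0)" .
    show ?thesis unfolding covd_def[of "tanP c" \<phi> "covd (tanP c) \<phi> \<tau>P (1,0)" "(1,0)" "(s,t)"] p
      by (simp add: tanP_def phie covd_def)
  qed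
  have ccv2: "covd (tanP c) \<phi> (covd (tanP c) \<phi> \<tau>P (0,1)) (0,1) (s,t) = 0" if "s \<in> I" for s t
  proof -
    have "covd (tanP c) \<phi> \<tau>P (0,1) w = 0" if "w \<in> I \<times> UNIV" for w
      using cv2[OF inI[OF that], of "snd w"] by simp
    from pd_const[OF o2 _ this] that have "pd (covd (tanP c) \<phi> \<tau>P (0,1)) (0,1) (s,t) = 0" by auto
    then show ?thesis by (simp add: covd_def tanP_def phie zero_prod_def)
  qed
  have bitg: "bitension (lf c) (tanN c) (curvN c) \<gamma> s =
      covd (tanN c) \<gamma> C 1 s + curvN c (\<gamma> s) (pd \<gamma> 1 s) (\<tau> s) (pd \<gamma> 1 s)" if "s \<in> I" for s
    using ginvc[OF that] chc[OF that]
    by (simp add: bitension_def Let_def Basis_real_def \<tau>_def[symmetric] C_def)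
  have bitP: "bitension (lfP c) (tanP c) (curvP c) \<phi> (s,t) = (bitension (lf c) (tanN c) (curvN c) \<gamma> s, 0)"
    if "s \<in> I" for s t
  proof -
    have sI: "(s,t) \<in> I \<times> UNIV" using that by simp
    have g: "ginv (indmet (lfP c) \<phi> (s,t)) i j = (if i = j then 1 else 0)" if "i \<in> Basis" "j \<in> Basis" for i j
      using ginvP[OF sI that] .
    have ch: "christoffel (lfP c) \<phi> (s,t) i j k = 0" if "i \<in> Basis" "j \<in> Basis" "k \<in> Basis" for i j k
      using chP[OF sI that] .
    have "bitension (lfP c) (tanP c) (curvP c) \<phi> (s,t) =
       (\<Sum>i\<in>Basis. \<Sum>j\<in>Basis. (if i = j then 1 else (0::real)) *\<^sub>R
          covd (tanP c) \<phi> (covd (tanP c) \<phi> \<tau>P j) i (s,t))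
     + (\<Sum>i\<in>Basis. \<Sum>j\<in>Basis. (if i = j then 1 else (0::real)) *\<^sub>R
          curvP c (\<phi> (s,t)) (pd \<phi> i (s,t)) (\<tau>P (s,t)) (pd \<phi> j (s,t)))"
      unfolding bitension_def Let_def \<tau>P_def[symmetric] using g ch
      by (intro arg_cong2[where f = "(+)"] sum.cong refl) simp_all
    also have "\<dots> = (\<Sum>i\<in>Basis. covd (tanP c) \<phi> (covd (tanP c) \<phi> \<tau>P i) i (s,t))
       + (\<Sum>i\<in>Basis. curvP c (\<phi> (s,t)) (pd \<phi> i (s,t)) (\<tau>P (s,t)) (pd \<phi> i (s,t)))"
      by (simp add: diag_sum)
    also have "\<dots> = (bitension (lf c) (tanN c) (curvN c) \<gamma> s, 0)"
      unfolding sum_B2 bitg[OF that] using ccv1[OF that] ccv2[OF that] pdphi[OF that] tauP[OF sI]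
      by (simp add: curvP_def zero_prod_def phie)
    finally show ?thesis .
  qed
  have nrmg: "nrm (lf c) \<gamma> s X = X - lf c X (pd \<gamma> 1 s) *\<^sub>R pd \<gamma> 1 s" if "s \<in> I" for s X
    using ginvc[OF that] by (simp add: nrm_def Basis_real_def)
  have nrmP: "nrm (lfP c) \<phi> (s,t) (X, 0) = (nrm (lf c) \<gamma> s X, 0)" if "s \<in> I" for s t X
  proof -
    have sI: "(s,t) \<in> I \<times> UNIV" using that by simp
    have "nrm (lfP c) \<phi> (s,t) (X, 0) = (X, 0) - (\<Sum>i\<in>Basis. \<Sum>j\<in>Basis. (if i = j then 1 else (0::real)) *\<^sub>R
          (lfP c (X, 0) (pd \<phi> j (s,t)) *\<^sub>R pd \<phi> i (s,t)))"
      unfolding nrm_def using ginvP[OF sI] by (intro arg_cong2[where f = "(-)"] sum.cong refl) simp_all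
    also have "\<dots> = (X, 0) - (\<Sum>i\<in>Basis. lfP c (X, 0) (pd \<phi> i (s,t)) *\<^sub>R pd \<phi> i (s,t))"
      by (simp only: diag_sum finite_Basis)
    also have "\<dots> = (nrm (lf c) \<gamma> s X, 0)"
      unfolding sum_B2 nrmg[OF that] using pdphi[OF that] by (simp add: lfP_def)
    finally show ?thesis .
  qed
  have key: "nrm (lfP c) \<phi> (s,t) (bitension (lfP c) (tanP c) (curvP c) \<phi> (s,t))
      - lam *\<^sub>R nrm (lfP c) \<phi> (s,t) (\<tau>P (s,t)) =
      (nrm (lf c) \<gamma> s (bitension (lf c) (tanN c) (curvN c) \<gamma> s) - lam *\<^sub>R nrm (lf c) \<gamma> s (\<tau> s), 0)"
    if "s \<in> I" for s t
    using bitP[OF that] tauP[of "(s,t)"] that nrmP[OF that] by simp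
  show ?thesis
    unfolding biminimal_def \<phi>_def[symmetric] \<tau>P_def[symmetric] \<tau>_def[symmetric]
  proof
    assume L: "\<forall>u\<in>I \<times> UNIV. nrm (lfP c) \<phi> u (bitension (lfP c) (tanP c) (curvP c) \<phi> u) - lam *\<^sub>R nrm (lfP c) \<phi> u (\<tau>P u) = 0"
    show "\<forall>u\<in>I. nrm (lf c) \<gamma> u (bitension (lf c) (tanN c) (curvN c) \<gamma> u) - lam *\<^sub>R nrm (lf c) \<gamma> u (\<tau> u) = 0"
    proof
      fix s assume s: "s \<in> I"
      from L s have "nrm (lfP c) \<phi> (s,0) (bitension (lfP c) (tanP c) (curvP c) \<phi> (s,0)) - lam *\<^sub>R nrm (lfP c) \<phi> (s,0) (\<tau>P (s,0)) = 0" by auto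
      then show "nrm (lf c) \<gamma> s (bitension (lf c) (tanN c) (curvN c) \<gamma> s) - lam *\<^sub>R nrm (lf c) \<gamma> s (\<tau> s) = 0"
        unfolding key[OF s] by (simp add: zero_prod_def)
    qed
  next
    assume R: "\<forall>u\<in>I. nrm (lf c) \<gamma> u (bitension (lf c) (tanN c) (curvN c) \<gamma> u) - lam *\<^sub>R nrm (lf c) \<gamma> u (\<tau> u) = 0"
    show "\<forall>u\<in>I \<times> UNIV. nrm (lfP c) \<phi> u (bitension (lfP c) (tanP c) (curvP c) \<phi> u) - lam *\<^sub>R nrm (lfP c) \<phi> u (\<tau>P u) = 0"
    proof
      fix u assume u: "u \<in> I \<times> (UNIV :: real set)"
      obtain s t where w: "u = (s,t)" "s \<in> I" using u by (metis mem_Times_iff prod.collapse)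
      show "nrm (lfP c) \<phi> u (bitension (lfP c) (tanP c) (curvP c) \<phi> u) - lam *\<^sub>R nrm (lfP c) \<phi> u (\<tau>P u) = 0"
        unfolding w(1) key[OF w(2)] using R w(2) by (simp add: zero_prod_def)
    qed
  qed
qed

end
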